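(* For every fixed integer $r\ge 1$ there is a constant $C_r>0$ such that the following holds. Let $n\ge 1$ and let $\mathbf a=(a_1,\dots,a_n)$ be real numbers such that for all disjoint subsets $x,y\subset[n]$, not both empty, with $|x|+|y|\le 2r$, we have $\sum_{i\in x}a_i\ne\sum_{j\in y}a_j$. Then \[\rho(\mathbf a):=\max_{\alpha\in\mathbb R}\Pr\big[\epsilon_1a_1+\cdots+\epsilon_na_n=\alpha\big]\le C_r\, n^{-r-1/2},\] where $\epsilon_1,\dots,\epsilon_n$ are independent random variables with $\Pr[\epsilon_i=0]=\Pr[\epsilon_i=1]=1/2$.
   Context: $[n]=\{1,\dots,n\}$. *)

theory Defs
  imports "HOL-Analysis.Analysis"
begin

text \<open>Probability that eps_1 a_1 + ... + eps_n a_n = alpha, where eps_i are independent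
  uniform on {0,1}: a choice of eps corresponds to the subset S = {i. eps_i = 1} of [n],
  all 2^n subsets being equally likely.\<close>
definition prob_sum :: "nat \<Rightarrow> (nat \<Rightarrow> real) \<Rightarrow> real \<Rightarrow> real" where
  "prob_sum n a \<alpha> = real (card {S. S \<subseteq> {1..n} \<and> (\<Sum>i\<in>S. a i) = \<alpha>}) / 2 ^ n"

definition rho :: "nat \<Rightarrow> (nat \<Rightarrow> real) \<Rightarrow> real" where
  "rho n a = (SUP \<alpha>. prob_sum n a \<alpha>)"

end

theory Submission
  imports Defs "HOL-Number_Theory.Cong"
begin

definition sumset_mod :: "nat \<Rightarrow> nat set \<Rightarrow> nat set \<Rightarrow> nat set" where
  "sumset_mod p A B = (\<lambda>(x,y). (x+y) mod p) ` (A \<times> B)"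

definition trm :: "nat \<Rightarrow> nat \<Rightarrow> nat set \<Rightarrow> nat set" where
  "trm p e X = (\<lambda>x. (x + e) mod p) ` X"

lemma trm_inj: "inj_on (\<lambda>x::nat. (x + e) mod p) {..<p}"
proof (rule inj_onI)
  fix x y assume "x \<in> {..<p}" "y \<in> {..<p}" "(x + e) mod p = (y + e) mod p"
  then have "[x + e = y + e] (mod p)" by (simp add: cong_def)
  then have "[x = y] (mod p)" by (simp add: cong_add_rcancel_nat)
  then show "x = y" using \<open>x \<in> {..<p}\<close> \<open>y \<in> {..<p}\<close> by (simp add: cong_def)
qed

lemma card_trm: "X \<subseteq> {..<p} \<Longrightarrow> card (trm p e X) = card X"
  unfolding trm_def by (rule card_image) (rule inj_on_subset[OF trm_inj])

lemma trm_sub: "p > 0 \<Longrightarrow> trm p e X \<subseteq> {..<p}"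
  unfolding trm_def by auto

lemma sumset_sub: "p > 0 \<Longrightarrow> sumset_mod p A B \<subseteq> {..<p}"
  unfolding sumset_mod_def by auto

lemma sumset_ge_card: 
  assumes "A \<subseteq> {..<p}" "b \<in> B" "p > 0"
  shows "card A \<le> card (sumset_mod p A B)"
proof -
  have "trm p b A \<subseteq> sumset_mod p A B" unfolding trm_def sumset_mod_def using assms by force
  moreover have "finite (sumset_mod p A B)"
    using sumset_sub[OF assms(3)] finite_subset by blast
  ultimately show ?thesis using card_trm[OF assms(1)] by (metis card_mono)
qed

lemma translate_generates:
  fixes p d a :: nat
  assumes p: "prime p" and d: "0 < d" "d < p" and A: "A \<subseteq> {..<p}" "a \<in> A"
    and cl: "\<forall>x\<in>A. (x + d) mod p \<in> A"
  shows "A = {..<p}"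
proof -
  have step: "(a + k * d) mod p \<in> A" for k
  proof (induction k)
    case 0 then show ?case using A by auto
  next
    case (Suc k)
    have eq0: "a + Suc k * d = (a + k * d) + d" by simp
    have eq: "(a + Suc k * d) mod p = ((a + k * d) mod p + d) mod p"
      by (subst eq0) (rule mod_add_left_eq[symmetric])
    have "((a + k * d) mod p + d) mod p \<in> A" using cl Suc.IH by blast
    then show ?case by (simp only: eq)
  qed
  have "coprime d p" using p d
    by (metis nat_dvd_not_less prime_imp_coprime_nat coprime_commute)
  then obtain u where u: "[d * u = 1] (mod p)" using cong_solve_coprime_nat[of d p] by auto
  show ?thesis
  proof
    show "{..<p} \<subseteq> A"
    proof
      fix x assume x: "x \<in> {..<p}"
      define k where "k = u * (x + p - a mod p)"
      have "[a + k * d = a + (x + p - a mod p) * (d * u)] (mod p)"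
        unfolding k_def by (simp add: ac_simps)
      also have "[a + (x + p - a mod p) * (d * u) = a + (x + p - a mod p) * 1] (mod p)"
        by (intro cong_add cong_mult cong_refl u)
      also have "a + (x + p - a mod p) * 1 = (a - a mod p) + x + p"
      proof -
        have m1: "a mod p \<le> a" by simp
        have m2: "a mod p < p" using prime_gt_0_nat[OF p] by simp
        show ?thesis using m1 m2 by linarith
      qed
      also have "[(a - a mod p) + x + p = x] (mod p)"
        by (simp add: cong_def minus_mod_eq_mult_div)
      finally have "(a + k * d) mod p = x" using x by (simp add: cong_def)
      then show "x \<in> A" using step[of k] by simp
    qed
  qed (use A in auto)
qed

lemma cauchy_davenport:
  assumes p: "prime p"
  shows "\<lbrakk>A \<subseteq> {..<p}; B \<subseteq> {..<p}; A \<noteq> {}; B \<noteq> {}\<rbrakk> \<Longrightarrow>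
     min p (card A + card B - 1) \<le> card (sumset_mod p A B)"
proof (induction "card B" arbitrary: A B rule: less_induct)
  case less
  have p0: "p > 0" using p prime_gt_0_nat by blast
  have finA: "finite A" and finB: "finite B" using less finite_subset by blast+
  have finS: "finite (sumset_mod p A B)" using sumset_sub[OF p0] finite_subset by blast
  show ?case
  proof (cases "card B \<le> 1")
    case True
    then have "card B = 1" using less finB by (simp add: card_gt_0_iff le_antisym Suc_leI)
    then obtain b where "B = {b}" by (rule card_1_singletonE)
    then have "card A \<le> card (sumset_mod p A B)" using sumset_ge_card[OF less(2) _ p0] by blast
    then show ?thesis using \<open>card B = 1\<close> by simp
  next
    case False
    show ?thesis
    proof (cases "A = {..<p}")
      case True
      obtain b where "b \<in> B" using less by auto
      then have "card A \<le> card (sumset_mod p A B)" using sumset_ge_card[OF less(2) _ p0] by blast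
      then show ?thesis using True by simp
    next
      case notall: False
      have "\<not> (\<forall>x\<in>B. \<forall>y\<in>B. x = y)" using False card_le_Suc0_iff_eq[OF finB] by simp
      then have "\<exists>b1\<in>B. \<exists>b2\<in>B. b1 \<noteq> b2" by blast
      then obtain b1 b2 where b: "b1 \<in> B" "b2 \<in> B" "b1 \<noteq> b2" by blast
      have b1p: "b1 < p" and b2p: "b2 < p" using b less by auto
      define d where "d = (b2 + p - b1) mod p"
      have dp: "d < p" using p0 d_def by simp
      have d0: "d \<noteq> 0"
      proof (cases "b1 < b2")
        case True
        then have "b2 + p - b1 = (b2 - b1) + p" by simp
        then have "d = (b2 - b1) mod p" unfolding d_def by (simp only: mod_add_self2)
        also have "\<dots> = b2 - b1" using b2p by simp
        finally show ?thesis using True by simp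
      next
        case False
        then have "b2 < b1" using b by simp
        then have "b2 + p - b1 < p" "b2 + p - b1 > 0" using b1p by auto
        then show ?thesis unfolding d_def by (simp only: mod_less)
      qed
      obtain a where a: "a \<in> A" "(a + d) mod p \<notin> A"
      proof -
        obtain a0 where "a0 \<in> A" using less by auto
        then have "\<not> (\<forall>x\<in>A. (x + d) mod p \<in> A)"
          using translate_generates[OF p _ dp less(2)] d0 notall by blast
        then show ?thesis using that by blast
      qed
      have ap: "a < p" using a less by auto
      define e where "e = (a + p - b1) mod p"
      have sh: "(y + e) mod p = (y + a + p - b1) mod p" if "y < p" for y
      proof -
        have "y + (a + p - b1) = y + a + p - b1" using b1p by simp
        then show ?thesis unfolding e_def by (simp only: mod_add_right_eq)
      qed
      have e1: "(b1 + e) mod p = a" using sh[OF b1p] b1p ap by simp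
      have e2: "(b2 + e) mod p = (a + d) mod p"
        using sh[OF b2p] b1p unfolding d_def by (simp add: mod_add_right_eq add.commute add.left_commute)
      define A' where "A' = A \<union> trm p e B"
      define B' where "B' = {y \<in> B. (y + e) mod p \<in> A}"
      have b1B': "b1 \<in> B'" using e1 a b unfolding B'_def by auto
      have b2B': "b2 \<notin> B'" using e2 a unfolding B'_def by auto
      have B'sub: "B' \<subseteq> B" unfolding B'_def by auto
      have cardB': "card B' < card B" using B'sub b2B' b finB by (metis psubset_card_mono psubsetI)
      have A'sub: "A' \<subseteq> {..<p}" unfolding A'_def using less trm_sub[OF p0] by auto
      have B'sub2: "B' \<subseteq> {..<p}" using B'sub less by auto
      have IH: "min p (card A' + card B' - 1) \<le> card (sumset_mod p A' B')"
        using less(1)[OF cardB' A'sub B'sub2] b1B' less(4) unfolding A'_def by blast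
      have subs: "sumset_mod p A' B' \<subseteq> sumset_mod p A B"
      proof
        fix z assume "z \<in> sumset_mod p A' B'"
        then obtain x y where xy: "x \<in> A'" "y \<in> B'" "z = (x + y) mod p" unfolding sumset_mod_def by auto
        show "z \<in> sumset_mod p A B"
        proof (cases "x \<in> A")
          case True then show ?thesis using xy B'sub unfolding sumset_mod_def by force
        next
          case False
          then obtain b where bb: "b \<in> B" "x = (b + e) mod p" using xy unfolding A'_def trm_def by auto
          have "z = ((y + e) mod p + b) mod p" using xy bb by (simp add: mod_add_left_eq mod_add_right_eq ac_simps)
          moreover have "(y + e) mod p \<in> A" using xy unfolding B'_def by auto
          ultimately show ?thesis using bb unfolding sumset_mod_def by force
        qed
      qed
      have inter: "A \<inter> trm p e B = (\<lambda>x. (x + e) mod p) ` B'"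
        unfolding B'_def trm_def by auto
      have "card (A \<inter> trm p e B) = card B'"
        unfolding inter by (rule card_image) (rule inj_on_subset[OF trm_inj B'sub2])
      moreover have "card A' + card (A \<inter> trm p e B) = card A + card (trm p e B)"
        unfolding A'_def using finA finB card_Un_Int[of A "trm p e B"] unfolding trm_def by auto
      moreover have "card (trm p e B) = card B" using card_trm less by auto
      ultimately have "card A' + card B' = card A + card B" by simp
      then show ?thesis using IH subs card_mono[OF finS subs] by simp
    qed
  qed
qed

fun ks :: "nat \<Rightarrow> nat set \<Rightarrow> nat \<Rightarrow> nat set" where
  "ks p A 0 = {0}"
| "ks p A (Suc k) = sumset_mod p (ks p A k) A"

lemma ks_sub: "p > 0 \<Longrightarrow> ks p A k \<subseteq> {..<p}"
  by (cases k) (auto simp: sumset_sub)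

lemma ks_nonempty: "A \<noteq> {} \<Longrightarrow> ks p A k \<noteq> {}"
  by (induction k) (auto simp: sumset_mod_def)

lemma ks_card:
  assumes p: "prime p" and A: "A \<subseteq> {..<p}" "A \<noteq> {}"
  shows "min p (k * card A - k + 1) \<le> card (ks p A k)"
proof (induction k)
  case 0 then show ?case by simp
next
  case (Suc k)
  have p0: "p > 0" using p prime_gt_0_nat by blast
  have cA: "card A \<ge> 1" using A finite_subset[OF A(1)] by (simp add: Suc_leI card_gt_0_iff)
  have cd: "min p (card (ks p A k) + card A - 1) \<le> card (ks p A (Suc k))"
    using cauchy_davenport[OF p ks_sub[OF p0] A(1) ks_nonempty[OF A(2)] A(2)] by simp
  show ?case
  proof (cases "p \<le> k * card A - k + 1")
    case True
    then have "p \<le> card (ks p A k)" using Suc.IH by simp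
    then show ?thesis using cd cA by simp
  next
    case False
    then have "k * card A - k + 1 \<le> card (ks p A k)" using Suc.IH by simp
    then have "Suc k * card A - Suc k + 1 \<le> card (ks p A k) + card A - 1"
      using cA by (simp add: algebra_simps) 
    then show ?thesis using cd by simp
  qed
qed

definition ee :: "real \<Rightarrow> complex" where "ee x = cis (2 * pi * x)"

lemma ee_add: "ee (x + y) = ee x * ee y"
  by (simp add: ee_def distrib_left cis_mult)

lemma norm_ee [simp]: "norm (ee x) = 1"
  by (simp add: ee_def)

lemma ee_int [simp]: "ee (of_int k) = 1"
  by (simp add: ee_def)

lemma ee_zero [simp]: "ee 0 = 1"
  by (simp add: ee_def)

lemma ee_eq_1: "ee x = 1 \<Longrightarrow> \<exists>k::int. x = of_int k"
proof -
  assume "ee x = 1"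
  then have "cos (2 * pi * x) = 1" unfolding ee_def by (metis cis.sel(1) one_complex.sel(1))
  then obtain n :: int where "2 * pi * x = of_int n * 2 * pi" using cos_one_2pi_int by blast
  then have "x = of_int n" by simp
  then show ?thesis by blast
qed

lemma ee_sum: "ee (\<Sum>i\<in>S. f i) = (\<Prod>i\<in>S. ee (f i))"
  by (induction S rule: infinite_finite_induct) (auto simp: ee_add)

lemma ee_power: "ee x ^ t = ee (real t * x)"
  by (induction t) (auto simp: ee_add distrib_right)

lemma cnj_ee: "cnj (ee x) = ee (- x)"
  by (simp add: ee_def cis_cnj)

lemma orth:
  fixes d :: int and p :: nat
  assumes p: "p > 0"
  shows "(\<Sum>t<p. ee (of_int d * real t / real p)) = (if int p dvd d then of_nat p else 0)"
proof -
  define w where "w = ee (of_int d / real p)"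
  have eq: "ee (of_int d * real t / real p) = w ^ t" for t
    unfolding w_def ee_power by (simp add: field_simps)
  show ?thesis
  proof (cases "int p dvd d")
    case True
    then obtain k where k: "d = int p * k" by (elim dvdE)
    have "w = 1" unfolding w_def k using p by simp
    then show ?thesis using True by (simp add: eq)
  next
    case False
    have w1: "w \<noteq> 1"
    proof
      assume "w = 1"
      then obtain k :: int where "of_int d / real p = of_int k" unfolding w_def using ee_eq_1 by blast
      then have "of_int d = real p * of_int k" using p by (simp add: field_simps)
      then have "d = int p * k" by (metis of_int_eq_iff of_int_mult of_int_of_nat_eq)
      then show False using False by simp
    qed
    have wp: "w ^ p = 1" unfolding w_def ee_power using p by simp
    have "(\<Sum>t<p. w ^ t) = 0" using w1 wp by (simp add: sum_gp_strict)
    then show ?thesis using False by (simp add: eq)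
  qed
qed

lemma unit_ineq:
  fixes z :: complex
  assumes "norm z = 1"
  shows "norm (1 + z) \<le> 2 * exp (- (norm (1 - z))\<^sup>2 / 8)"
proof -
  have par: "(norm (1 + z))\<^sup>2 + (norm (1 - z))\<^sup>2 = 4"
  proof -
    have "(norm (1 + z))\<^sup>2 = (1 + Re z)\<^sup>2 + (Im z)\<^sup>2" by (simp add: cmod_power2)
    moreover have "(norm (1 - z))\<^sup>2 = (1 - Re z)\<^sup>2 + (Im z)\<^sup>2" by (simp add: cmod_power2)
    moreover have "(Re z)\<^sup>2 + (Im z)\<^sup>2 = 1" using assms by (simp add: cmod_power2[symmetric])
    ultimately show ?thesis by (simp add: power2_eq_square algebra_simps)
  qed
  define u where "u = (norm (1 - z))\<^sup>2"
  have "(norm (1 + z) / 2)\<^sup>2 = 1 - u / 4" using par unfolding u_def by (simp add: power_divide)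
  also have "\<dots> \<le> exp (- u / 4)" using exp_ge_add_one_self[of "- u / 4"] by simp
  also have "\<dots> = (exp (- u / 8))\<^sup>2" by (simp add: power2_eq_square exp_add[symmetric])
  finally have "norm (1 + z) / 2 \<le> exp (- u / 8)"
    by (rule power2_le_imp_le) simp
  then show ?thesis unfolding u_def by simp
qed

lemma prod_unit_sub1:
  fixes w :: "nat \<Rightarrow> complex"
  assumes "finite S" "\<And>i. i \<in> S \<Longrightarrow> norm (w i) = 1"
  shows "norm ((\<Prod>i\<in>S. w i) - 1) \<le> (\<Sum>i\<in>S. norm (1 - w i))"
  using assms
proof (induction S rule: finite_induct)
  case empty then show ?case by simp
next
  case (insert j S)
  have "(\<Prod>i\<in>insert j S. w i) - 1 = ((\<Prod>i\<in>S. w i) - 1) * w j + (w j - 1)"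
    using insert by (simp add: algebra_simps)
  then have "norm ((\<Prod>i\<in>insert j S. w i) - 1) \<le> norm ((\<Prod>i\<in>S. w i) - 1) * norm (w j) + norm (w j - 1)"
    by (metis norm_mult norm_triangle_ineq)
  also have "\<dots> = norm ((\<Prod>i\<in>S. w i) - 1) + norm (1 - w j)"
    using insert by (simp add: norm_minus_commute)
  also have "\<dots> \<le> (\<Sum>i\<in>S. norm (1 - w i)) + norm (1 - w j)"
    using insert by simp
  finally show ?case using insert by (simp add: add.commute)
qed

locale hz =
  fixes p :: nat and b :: "nat \<Rightarrow> int" and n :: nat
  assumes prime: "prime p"
begin

lemma p0: "p > 0" using prime prime_gt_0_nat by blast

definition z :: "nat \<Rightarrow> nat \<Rightarrow> complex" where
  "z i t = ee (of_int (b i) * real t / real p)"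

definition G :: "nat \<Rightarrow> real" where
  "G t = L2_set (\<lambda>i. norm (1 - z i t)) {1..n}"

definition sig :: "nat set \<Rightarrow> int" where
  "sig S = (\<Sum>i\<in>S. b i)"

definition T :: "real \<Rightarrow> nat set" where
  "T c = {t. t < p \<and> G t \<le> c}"

lemma norm_z [simp]: "norm (z i t) = 1"
  by (simp add: z_def)

lemma z0 [simp]: "z i 0 = 1"
  by (simp add: z_def)

lemma z_mod: "z i ((t1 + t2) mod p) = z i t1 * z i t2"
proof -
  have "t1 + t2 = p * ((t1 + t2) div p) + (t1 + t2) mod p" by simp
  then have eqm: "real ((t1 + t2) mod p) = real t1 + real t2 - real p * real ((t1 + t2) div p)"
    by (metis add_diff_cancel_left' of_nat_add of_nat_mult)
  have "of_int (b i) * real ((t1 + t2) mod p) / real p =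
      of_int (b i) * real t1 / real p + of_int (b i) * real t2 / real p + of_int (- b i * int ((t1 + t2) div p))"
    unfolding eqm using p0 by (simp add: field_simps)
  then show ?thesis unfolding z_def by (simp only: ee_add ee_int mult_1_right)
qed

lemma h_sub: "norm (1 - z i ((t1 + t2) mod p)) \<le> norm (1 - z i t1) + norm (1 - z i t2)"
proof -
  have "1 - z i ((t1 + t2) mod p) = (1 - z i t1) + z i t1 * (1 - z i t2)"
    by (simp add: z_mod algebra_simps)
  then show ?thesis by (metis norm_triangle_ineq norm_mult norm_z mult_1)
qed

lemma G_nonneg: "G t \<ge> 0"
  unfolding G_def by (rule L2_set_nonneg)

lemma G0: "G 0 = 0"
  unfolding G_def by (simp add: L2_set_def)

lemma G_sub: "G ((t1 + t2) mod p) \<le> G t1 + G t2"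
proof -
  have "G ((t1 + t2) mod p) \<le> L2_set (\<lambda>i. norm (1 - z i t1) + norm (1 - z i t2)) {1..n}"
    unfolding G_def by (rule L2_set_mono) (auto simp: h_sub)
  also have "\<dots> \<le> G t1 + G t2" unfolding G_def by (rule L2_set_triangle_ineq)
  finally show ?thesis .
qed

lemma G_sq: "(G t)\<^sup>2 = (\<Sum>i\<in>{1..n}. (norm (1 - z i t))\<^sup>2)"
  unfolding G_def L2_set_def by (simp add: sum_nonneg)

lemma ks_G:
  assumes "\<forall>t\<in>A. G t \<le> c" "c \<ge> 0"
  shows "\<forall>t\<in>ks p A k. G t \<le> real k * c"
proof (induction k)
  case 0 then show ?case by (simp add: G0)
next
  case (Suc k)
  show ?case
  proof
    fix t assume "t \<in> ks p A (Suc k)"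
    then obtain x y where xy: "x \<in> ks p A k" "y \<in> A" "t = (x + y) mod p"
      by (auto simp: sumset_mod_def)
    have "G t \<le> G x + G y" using xy G_sub by simp
    also have "\<dots> \<le> real k * c + c" using xy Suc.IH assms by (simp add: add_mono)
    finally show "G t \<le> real (Suc k) * c" by (simp add: algebra_simps)
  qed
qed

lemma prod_z: "(\<Prod>i\<in>S. z i t) = ee (of_int (sig S) * real t / real p)"
  unfolding z_def sig_def ee_sum[symmetric]
  by (simp add: sum_distrib_right sum_divide_distrib)

end

lemma dvd_small_int: "int p dvd x \<Longrightarrow> \<bar>x\<bar> < int p \<Longrightarrow> x = 0"
  using dvd_imp_le_int[of x "int p"] by (cases "x = 0") auto

context hz
begin

lemma count_eq:
  assumes bnd: "\<forall>S. S \<subseteq> {1..n} \<longrightarrow> \<bar>sig S - \<beta>\<bar> < int p"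
  shows "(\<Sum>t<p. ee (- of_int \<beta> * real t / real p) * (\<Prod>i\<in>{1..n}. 1 + z i t))
     = of_nat (p * card {S. S \<subseteq> {1..n} \<and> sig S = \<beta>})"
proof -
  have prod: "(\<Prod>i\<in>{1..n}. 1 + z i t) = (\<Sum>S\<in>Pow {1..n}. ee (of_int (sig S) * real t / real p))" for t
  proof -
    have "(\<Prod>i\<in>{1..n}. 1 + z i t) = (\<Prod>i\<in>{1..n}. z i t + 1)" by (simp add: add.commute)
    also have "\<dots> = (\<Sum>S\<in>Pow {1..n}. (\<Prod>i\<in>S. z i t) * (\<Prod>i\<in>{1..n}-S. 1))"
      by (rule prod_add) simp
    also have "\<dots> = (\<Sum>S\<in>Pow {1..n}. ee (of_int (sig S) * real t / real p))"
      by (simp add: prod_z)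
    finally show ?thesis .
  qed
  have trm_eq: "ee (- of_int \<beta> * real t / real p) * ee (of_int (sig S) * real t / real p)
      = ee (of_int (sig S - \<beta>) * real t / real p)" for t S
  proof -
    have "- of_int \<beta> * real t / real p + of_int (sig S) * real t / real p
        = of_int (sig S - \<beta>) * real t / real p" using p0 by (simp add: field_simps)
    then show ?thesis by (simp only: ee_add[symmetric])
  qed
  have "(\<Sum>t<p. ee (- of_int \<beta> * real t / real p) * (\<Prod>i\<in>{1..n}. 1 + z i t))
      = (\<Sum>t<p. \<Sum>S\<in>Pow {1..n}. ee (of_int (sig S - \<beta>) * real t / real p))"
    by (simp only: prod sum_distrib_left trm_eq)
  also have "\<dots> = (\<Sum>S\<in>Pow {1..n}. \<Sum>t<p. ee (of_int (sig S - \<beta>) * real t / real p))"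
    by (rule sum.swap)
  also have "\<dots> = (\<Sum>S\<in>Pow {1..n}. if sig S = \<beta> then of_nat p else 0)"
  proof (rule sum.cong[OF refl])
    fix S assume "S \<in> Pow {1..n}"
    then have b: "\<bar>sig S - \<beta>\<bar> < int p" using bnd by auto
    have "int p dvd (sig S - \<beta>) \<longleftrightarrow> sig S = \<beta>" using dvd_small_int[OF _ b] by auto
    then show "(\<Sum>t<p. ee (of_int (sig S - \<beta>) * real t / real p)) = (if sig S = \<beta> then of_nat p else 0)"
      using orth[OF p0, of "sig S - \<beta>"] by simp
  qed
  also have "\<dots> = (\<Sum>S\<in>{S \<in> Pow {1..n}. sig S = \<beta>}. of_nat p)"
    by (rule sum.inter_filter[symmetric]) simp
  also have "\<dots> = of_nat (p * card {S. S \<subseteq> {1..n} \<and> sig S = \<beta>})"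
  proof -
    have "{S \<in> Pow {1..n}. sig S = \<beta>} = {S. S \<subseteq> {1..n} \<and> sig S = \<beta>}" by auto
    then show ?thesis by (simp add: mult.commute)
  qed
  finally show ?thesis .
qed

lemma fourier_bound:
  assumes bnd: "\<forall>S. S \<subseteq> {1..n} \<longrightarrow> \<bar>sig S - \<beta>\<bar> < int p"
  shows "real (card {S. S \<subseteq> {1..n} \<and> sig S = \<beta>}) / 2 ^ n \<le> (\<Sum>t<p. exp (- (G t)\<^sup>2 / 8)) / real p"
proof -
  let ?c = "card {S. S \<subseteq> {1..n} \<and> sig S = \<beta>}"
  have "real (p * ?c) = norm (of_nat (p * ?c) :: complex)" by (simp only: norm_of_nat)
  also have "\<dots> = norm (\<Sum>t<p. ee (- of_int \<beta> * real t / real p) * (\<Prod>i\<in>{1..n}. 1 + z i t))"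
    using count_eq[OF bnd] by simp
  also have "\<dots> \<le> (\<Sum>t<p. norm (ee (- of_int \<beta> * real t / real p) * (\<Prod>i\<in>{1..n}. 1 + z i t)))"
    by (rule norm_sum)
  also have "\<dots> = (\<Sum>t<p. \<Prod>i\<in>{1..n}. norm (1 + z i t))"
    by (simp add: norm_mult prod_norm)
  also have "\<dots> \<le> (\<Sum>t<p. \<Prod>i\<in>{1..n}. 2 * exp (- (norm (1 - z i t))\<^sup>2 / 8))"
    using unit_ineq[OF norm_z] by (intro sum_mono prod_mono conjI) auto
  also have "\<dots> = (\<Sum>t<p. 2 ^ n * exp (- (G t)\<^sup>2 / 8))"
  proof (rule sum.cong[OF refl])
    fix t
    have "(\<Prod>i\<in>{1..n}. 2 * exp (- (norm (1 - z i t))\<^sup>2 / 8))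
        = (\<Prod>i\<in>{1..n}. (2::real)) * (\<Prod>i\<in>{1..n}. exp (- (norm (1 - z i t))\<^sup>2 / 8))"
      by (rule prod.distrib)
    also have "\<dots> = 2 ^ n * exp (\<Sum>i\<in>{1..n}. - (norm (1 - z i t))\<^sup>2 / 8)"
      by (simp add: exp_sum)
    also have "(\<Sum>i\<in>{1..n}. - (norm (1 - z i t))\<^sup>2 / 8) = - (G t)\<^sup>2 / 8"
      by (simp add: G_sq sum_divide_distrib sum_negf)
    finally show "(\<Prod>i\<in>{1..n}. 2 * exp (- (norm (1 - z i t))\<^sup>2 / 8)) = 2 ^ n * exp (- (G t)\<^sup>2 / 8)" .
  qed
  also have "\<dots> = 2 ^ n * (\<Sum>t<p. exp (- (G t)\<^sup>2 / 8))"
    by (simp add: sum_distrib_left)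
  finally have "real p * real ?c \<le> 2 ^ n * (\<Sum>t<p. exp (- (G t)\<^sup>2 / 8))" by simp
  then show ?thesis using p0 by (simp add: field_simps)
qed

end

context hz
begin

definition X :: "nat \<Rightarrow> nat set set" where
  "X r = {x. x \<subseteq> {1..n} \<and> card x = r}"

definition W :: "nat \<Rightarrow> nat \<Rightarrow> complex" where
  "W r t = (\<Sum>x\<in>X r. \<Prod>i\<in>x. z i t)"

lemma finite_X: "finite (X r)"
  by (rule finite_subset[of _ "Pow {1..n}"]) (auto simp: X_def)

lemma card_X: "card (X r) = n choose r"
  unfolding X_def using n_subsets[of "{1..n}" r] by simp

lemma W_moment:
  assumes dist: "\<forall>x\<in>X r. \<forall>y\<in>X r. sig x = sig y \<longrightarrow> x = y"
    and bnd2: "\<forall>x\<in>X r. \<forall>y\<in>X r. \<bar>sig x - sig y\<bar> < int p"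
  shows "(\<Sum>t<p. (norm (W r t))\<^sup>2) = real p * real (card (X r))"
proof -
  have sq: "complex_of_real ((norm (W r t))\<^sup>2)
      = (\<Sum>x\<in>X r. \<Sum>y\<in>X r. ee (of_int (sig x - sig y) * real t / real p))" for t
  proof -
    have "complex_of_real ((norm (W r t))\<^sup>2) = W r t * cnj (W r t)" by (rule complex_norm_square)
    also have "\<dots> = (\<Sum>x\<in>X r. ee (of_int (sig x) * real t / real p)) *
                     (\<Sum>y\<in>X r. ee (- (of_int (sig y) * real t / real p)))"
      unfolding W_def by (simp add: prod_z cnj_ee)
    also have "\<dots> = (\<Sum>x\<in>X r. \<Sum>y\<in>X r. ee (of_int (sig x) * real t / real p) * ee (- (of_int (sig y) * real t / real p)))"
      by (rule sum_product)
    also have "\<dots> = (\<Sum>x\<in>X r. \<Sum>y\<in>X r. ee (of_int (sig x - sig y) * real t / real p))"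
    proof (intro sum.cong refl)
      fix x y
      have "of_int (sig x) * real t / real p + - (of_int (sig y) * real t / real p)
          = of_int (sig x - sig y) * real t / real p" using p0 by (simp add: field_simps)
      then show "ee (of_int (sig x) * real t / real p) * ee (- (of_int (sig y) * real t / real p))
          = ee (of_int (sig x - sig y) * real t / real p)" by (simp only: ee_add[symmetric])
    qed
    finally show ?thesis .
  qed
  have "complex_of_real (\<Sum>t<p. (norm (W r t))\<^sup>2)
      = (\<Sum>t<p. \<Sum>x\<in>X r. \<Sum>y\<in>X r. ee (of_int (sig x - sig y) * real t / real p))"
    by (simp only: of_real_sum sq)
  also have "\<dots> = (\<Sum>x\<in>X r. \<Sum>t<p. \<Sum>y\<in>X r. ee (of_int (sig x - sig y) * real t / real p))"
    by (rule sum.swap)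
  also have "\<dots> = (\<Sum>x\<in>X r. \<Sum>y\<in>X r. \<Sum>t<p. ee (of_int (sig x - sig y) * real t / real p))"
    by (intro sum.cong refl sum.swap)
  also have "\<dots> = (\<Sum>x\<in>X r. \<Sum>y\<in>X r. if x = y then of_nat p else 0)"
  proof (intro sum.cong refl)
    fix x y assume xy: "x \<in> X r" "y \<in> X r"
    have "int p dvd (sig x - sig y) \<longleftrightarrow> x = y"
      using dvd_small_int[where x="sig x - sig y" and p=p] bnd2 dist xy by auto
    then show "(\<Sum>t<p. ee (of_int (sig x - sig y) * real t / real p)) = (if x = y then of_nat p else 0)"
      using orth[OF p0, of "sig x - sig y"] by simp
  qed
  also have "\<dots> = (\<Sum>x\<in>X r. of_nat p)"
    by (intro sum.cong refl) (simp add: finite_X)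
  also have "\<dots> = complex_of_real (real p * real (card (X r)))"
    by simp
  finally show ?thesis by (simp only: of_real_eq_iff)
qed

lemma card_X_containing:
  assumes i: "i \<in> {1..n}" and r: "r \<ge> 1"
  shows "card {x \<in> X r. i \<in> x} = (n - 1) choose (r - 1)"
proof -
  let ?Y = "{y. y \<subseteq> {1..n} - {i} \<and> card y = r - 1}"
  have eq: "{x \<in> X r. i \<in> x} = insert i ` ?Y"
  proof
    show "{x \<in> X r. i \<in> x} \<subseteq> insert i ` ?Y"
    proof
      fix x assume "x \<in> {x \<in> X r. i \<in> x}"
      then have x: "x \<subseteq> {1..n}" "card x = r" "i \<in> x" unfolding X_def by auto
      have fx: "finite x" using x(1) finite_subset by blast
      have "x - {i} \<in> ?Y" using x fx by auto
      moreover have "x = insert i (x - {i})" using x by auto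
      ultimately show "x \<in> insert i ` ?Y" by blast
    qed
  next
    show "insert i ` ?Y \<subseteq> {x \<in> X r. i \<in> x}"
    proof
      fix x assume "x \<in> insert i ` ?Y"
      then obtain y where y: "y \<subseteq> {1..n} - {i}" "card y = r - 1" "x = insert i y" by auto
      have fy: "finite y" using y(1) finite_subset by blast
      have "i \<notin> y" using y by auto
      then have "card x = r" using y fy r by simp
      then show "x \<in> {x \<in> X r. i \<in> x}" using y i unfolding X_def by auto
    qed
  qed
  have inj: "inj_on (insert i) ?Y"
    by (rule inj_onI) (metis Diff_iff insert_absorb insert_ident mem_Collect_eq subset_iff singletonI)
  have "card {x \<in> X r. i \<in> x} = card ?Y" unfolding eq by (rule card_image[OF inj])
  also have "\<dots> = card ({1..n} - {i}) choose (r - 1)" by (rule n_subsets) simp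
  also have "card ({1..n} - {i}) = n - 1" using i by simp
  finally show ?thesis .
qed

lemma W_lower:
  assumes r: "1 \<le> r" "r \<le> n"
  shows "norm (W r t) \<ge> real (card (X r)) * (1 - real r * G t / sqrt (real n))"
proof -
  define h where "h i = norm (1 - z i t)" for i
  have n0: "n > 0" using r by simp
  have "W r t - of_nat (card (X r)) = (\<Sum>x\<in>X r. (\<Prod>i\<in>x. z i t) - 1)"
    unfolding W_def by (simp add: sum_subtractf)
  then have "norm (W r t - of_nat (card (X r))) \<le> (\<Sum>x\<in>X r. norm ((\<Prod>i\<in>x. z i t) - 1))"
    by (simp add: norm_sum)
  also have "\<dots> \<le> (\<Sum>x\<in>X r. \<Sum>i\<in>x. h i)"
  proof (rule sum_mono)
    fix x assume "x \<in> X r"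
    then have "finite x" unfolding X_def using finite_subset by blast
    then show "norm ((\<Prod>i\<in>x. z i t) - 1) \<le> (\<Sum>i\<in>x. h i)"
      unfolding h_def by (rule prod_unit_sub1) simp
  qed
  also have "\<dots> = (\<Sum>x\<in>X r. \<Sum>i\<in>{1..n}. if i \<in> x then h i else 0)"
  proof (rule sum.cong[OF refl])
    fix x assume "x \<in> X r"
    then have "{i \<in> {1..n}. i \<in> x} = x" unfolding X_def by auto
    then show "(\<Sum>i\<in>x. h i) = (\<Sum>i\<in>{1..n}. if i \<in> x then h i else 0)"
      using sum.inter_filter[of "{1..n}" h "\<lambda>i. i \<in> x"] by simp
  qed
  also have "\<dots> = (\<Sum>i\<in>{1..n}. \<Sum>x\<in>X r. if i \<in> x then h i else 0)"
    by (rule sum.swap)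
  also have "\<dots> = (\<Sum>i\<in>{1..n}. h i * real ((n - 1) choose (r - 1)))"
  proof (rule sum.cong[OF refl])
    fix i assume i: "i \<in> {1..n}"
    have "(\<Sum>x\<in>X r. if i \<in> x then h i else 0) = (\<Sum>x\<in>{x \<in> X r. i \<in> x}. h i)"
      using sum.inter_filter[OF finite_X, where g="\<lambda>_. h i" and P="\<lambda>x. i \<in> x"] by simp
    also have "\<dots> = h i * real ((n - 1) choose (r - 1))"
      using card_X_containing[OF i r(1)] by simp
    finally show "(\<Sum>x\<in>X r. if i \<in> x then h i else 0) = h i * real ((n - 1) choose (r - 1))" .
  qed
  also have "\<dots> = real ((n - 1) choose (r - 1)) * (\<Sum>i\<in>{1..n}. h i)"
    unfolding sum_distrib_right[symmetric] by (rule mult.commute)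
  also have "\<dots> \<le> real ((n - 1) choose (r - 1)) * (sqrt (real n) * G t)"
  proof (rule mult_left_mono)
    have "(\<Sum>i\<in>{1..n}. 1 * h i)\<^sup>2 \<le> (\<Sum>i\<in>{1..n}. (1::real)\<^sup>2) * (\<Sum>i\<in>{1..n}. (h i)\<^sup>2)"
      by (rule Cauchy_Schwarz_ineq_sum)
    also have "\<dots> = real n * (G t)\<^sup>2" by (simp add: G_sq h_def)
    finally have cs: "(\<Sum>i\<in>{1..n}. h i)\<^sup>2 \<le> real n * (G t)\<^sup>2" by simp
    have "(\<Sum>i\<in>{1..n}. h i) = sqrt ((\<Sum>i\<in>{1..n}. h i)\<^sup>2)"
      by (simp add: h_def sum_nonneg)
    also have "\<dots> \<le> sqrt (real n * (G t)\<^sup>2)" using cs by (rule real_sqrt_le_mono)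
    also have "\<dots> = sqrt (real n) * G t" by (simp add: real_sqrt_mult G_nonneg)
    finally show "(\<Sum>i\<in>{1..n}. h i) \<le> sqrt (real n) * G t" .
  qed simp
  also have "\<dots> = real (card (X r)) * (real r * G t / sqrt (real n))"
  proof -
    have "r * (n choose r) = n * ((n - 1) choose (r - 1))"
      using times_binomial_minus1_eq[of r n] r by simp
    then have e: "real ((n - 1) choose (r - 1)) = real r * real (card (X r)) / real n"
      using n0 unfolding card_X by (simp add: field_simps) (metis of_nat_mult)
    have sn: "sqrt (real n) * sqrt (real n) = real n" by simp
    show ?thesis unfolding e using n0 sn by (simp add: field_simps)
  qed
  finally have "norm (W r t - of_nat (card (X r))) \<le> real (card (X r)) * (real r * G t / sqrt (real n))" .
  moreover have "norm (of_nat (card (X r)) :: complex) - norm (W r t) \<le> norm (W r t - of_nat (card (X r)))"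
    by (metis norm_minus_commute norm_triangle_ineq2)
  ultimately show ?thesis by (simp add: algebra_simps)
qed

lemma markov:
  assumes dist: "\<forall>x\<in>X r. \<forall>y\<in>X r. sig x = sig y \<longrightarrow> x = y"
    and bnd2: "\<forall>x\<in>X r. \<forall>y\<in>X r. \<bar>sig x - sig y\<bar> < int p"
    and r: "1 \<le> r" "r \<le> n"
  shows "real (card (T (sqrt (real n) / (2 * real r)))) * real (card (X r)) \<le> 4 * real p"
proof -
  define c0 where "c0 = sqrt (real n) / (2 * real r)"
  define C where "C = real (card (X r))"
  have n0: "n > 0" using r by simp
  have sn: "sqrt (real n) > 0" using n0 by simp
  have C0: "C \<ge> 0" unfolding C_def by simp
  have rc0: "real r * c0 = sqrt (real n) / 2" unfolding c0_def using r by simp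
  have low: "(C / 2)\<^sup>2 \<le> (norm (W r t))\<^sup>2" if "t \<in> T c0" for t
  proof -
    have "G t \<le> c0" using that unfolding T_def by simp
    then have "real r * G t \<le> real r * c0" by (rule mult_left_mono) simp
    then have "real r * G t \<le> 1 / 2 * sqrt (real n)" using rc0 by simp
    then have q: "real r * G t / sqrt (real n) \<le> 1 / 2"
      using sn by (simp only: pos_divide_le_eq)
    have "C * (1 / 2) \<le> C * (1 - real r * G t / sqrt (real n))"
      by (rule mult_left_mono) (use q C0 in auto)
    also have "\<dots> \<le> norm (W r t)" using W_lower[OF r] unfolding C_def by simp
    finally have "C / 2 \<le> norm (W r t)" by simp
    then show ?thesis using C0 by (simp add: power_mono)
  qed
  have Tsub: "T c0 \<subseteq> {..<p}" unfolding T_def by auto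
  have "real (card (T c0)) * (C / 2)\<^sup>2 = (\<Sum>t\<in>T c0. (C / 2)\<^sup>2)" by simp
  also have "\<dots> \<le> (\<Sum>t\<in>T c0. (norm (W r t))\<^sup>2)" by (rule sum_mono) (rule low)
  also have "\<dots> \<le> (\<Sum>t<p. (norm (W r t))\<^sup>2)" by (rule sum_mono2) (use Tsub in auto)
  also have "\<dots> = real p * C" unfolding C_def by (rule W_moment[OF dist bnd2])
  finally have ineq: "real (card (T c0)) * (C / 2)\<^sup>2 \<le> real p * C" .
  have "real (card (T c0)) * C \<le> 4 * real p"
  proof (cases "C = 0")
    case True then show ?thesis by simp
  next
    case False
    then have Cp: "C > 0" using C0 by simp
    have "(real (card (T c0)) * C) * C = 4 * (real (card (T c0)) * (C / 2)\<^sup>2)"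
      by (simp add: power2_eq_square)
    also have "\<dots> \<le> 4 * (real p * C)" using ineq by simp
    also have "\<dots> = (4 * real p) * C" by simp
    finally show ?thesis using Cp by (simp only: mult_le_cancel_right)
  qed
  then show ?thesis unfolding c0_def C_def .
qed

end

lemma floor_half:
  fixes x :: real
  assumes "x \<ge> 1"
  shows "real (nat \<lfloor>x\<rfloor>) \<ge> x / 2" "nat \<lfloor>x\<rfloor> \<ge> 1" "real (nat \<lfloor>x\<rfloor>) \<le> x"
proof -
  have f1: "real_of_int \<lfloor>x\<rfloor> > x - 1" by linarith
  have f2: "\<lfloor>x\<rfloor> \<ge> 1" using assms by linarith
  have f3: "real_of_int \<lfloor>x\<rfloor> \<le> x" by simp
  have eq: "real (nat \<lfloor>x\<rfloor>) = real_of_int \<lfloor>x\<rfloor>" using f2 by simp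
  show "nat \<lfloor>x\<rfloor> \<ge> 1" using f2 by (subst le_nat_iff) auto
  show "real (nat \<lfloor>x\<rfloor>) \<le> x" using eq f3 by simp
  show "real (nat \<lfloor>x\<rfloor>) \<ge> x / 2"
  proof (cases "x \<ge> 2")
    case True then show ?thesis using eq f1 by linarith
  next
    case False then show ?thesis using eq f2 by linarith
  qed
qed

lemma layer_cake:
  fixes s :: real
  assumes "s \<ge> 0"
  shows "exp (- s) \<le> (\<Sum>l<L. exp (- real l) * (if s \<le> real l + 1 then 1 else 0)) + exp (- real L)"
proof (cases "s \<ge> real L")
  case True
  have "exp (- s) \<le> exp (- real L)" using True by simp
  moreover have "(\<Sum>l<L. exp (- real l) * (if s \<le> real l + 1 then 1 else 0)) \<ge> 0"
    by (rule sum_nonneg) simp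
  ultimately show ?thesis by linarith
next
  case False
  define l0 where "l0 = nat \<lfloor>s\<rfloor>"
  have l0s: "real l0 \<le> s" "s \<le> real l0 + 1" using assms unfolding l0_def by linarith+
  have l0L: "l0 < L" using False l0s by linarith
  have "exp (- s) \<le> exp (- real l0) * (if s \<le> real l0 + 1 then 1 else 0)" using l0s by simp
  also have "\<dots> \<le> (\<Sum>l<L. exp (- real l) * (if s \<le> real l + 1 then 1 else 0))"
    by (rule member_le_sum) (use l0L in auto)
  finally have h: "exp (- s) \<le> (\<Sum>l<L. exp (- real l) * (if s \<le> real l + 1 then 1 else 0))" .
  show ?thesis using h exp_gt_zero[of "- real L"] by linarith
qed

lemma sum_half: "(\<Sum>l<L. (1/2::real) ^ l) = 2 - 2 / 2 ^ L"
  by (induction L) (auto simp: field_simps)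

lemma sum_lhalf: "(\<Sum>l<L. (real l + 1) * (1/2::real) ^ l) = 4 - (2 * real L + 4) / 2 ^ L"
proof (induction L)
  case 0 then show ?case by simp
next
  case (Suc L)
  have "(\<Sum>l<Suc L. (real l + 1) * (1/2::real) ^ l) = 4 - (2 * real L + 4) / 2 ^ L + (real L + 1) / 2 ^ L"
    using Suc by (simp add: power_divide)
  also have "\<dots> = 4 - (2 * real L + 6) / (2 * 2 ^ L)"
    by (simp add: field_simps)
  finally show ?case by (simp add: algebra_simps)
qed

lemma exp_neg_le_half: "exp (- real l) \<le> (1/2::real) ^ l"
proof -
  have "exp (- real l) = exp (- 1) ^ l" by (simp add: exp_of_nat_mult[symmetric])
  also have "\<dots> \<le> (1/2) ^ l"
  proof (rule power_mono)
    have "2 \<le> exp (1::real)" using exp_ge_add_one_self[of 1] by simp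
    then show "exp (- 1) \<le> (1/2::real)" by (simp add: exp_minus field_simps)
  qed simp
  finally show ?thesis .
qed

context hz
begin

lemma T_mono: "c \<le> c' \<Longrightarrow> T c \<subseteq> T c'"
  unfolding T_def by auto

lemma T_sub: "T c \<subseteq> {..<p}"
  unfolding T_def by auto

lemma finite_T: "finite (T c)"
  using T_sub finite_subset by blast

lemma level_bound:
  assumes K: "real (card (T c0)) \<le> K" "K < real p" and c: "0 < c" "c \<le> c0"
  shows "real (card (T c)) \<le> 2 * K * c / c0 + 1"
proof -
  have c00: "c0 > 0" using c by simp
  define k where "k = nat \<lfloor>c0 / c\<rfloor>"
  have x1: "c0 / c \<ge> 1" using c by simp
  have k1: "k \<ge> 1" and k2: "real k \<ge> c0 / c / 2" and k3: "real k \<le> c0 / c"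
    using floor_half[OF x1] unfolding k_def by auto
  define A where "A = T c"
  have A0: "0 \<in> A" unfolding A_def T_def using p0 c by (simp add: G0)
  have Asub: "A \<subseteq> {..<p}" unfolding A_def by (rule T_sub)
  have AG: "\<forall>t\<in>A. G t \<le> c" unfolding A_def T_def by auto
  have ksT: "ks p A k \<subseteq> T c0"
  proof
    fix t assume t: "t \<in> ks p A k"
    have "G t \<le> real k * c" using ks_G[OF AG] c t by auto
    also have "\<dots> \<le> c0" using k3 c by (simp add: pos_le_divide_eq)
    finally show "t \<in> T c0" using t ks_sub[OF p0] unfolding T_def by auto
  qed
  have cd: "min p (k * card A - k + 1) \<le> card (ks p A k)"
    by (rule ks_card[OF prime Asub]) (use A0 in auto)
  have "card (ks p A k) \<le> card (T c0)" by (rule card_mono[OF finite_T ksT])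
  then have ksK: "real (card (ks p A k)) \<le> K" using K by linarith
  have cA: "card A \<ge> 1" using A0 finite_T unfolding A_def by (metis One_nat_def Suc_leI card_gt_0_iff empty_iff)
  have "min p (k * card A - k + 1) \<noteq> p"
  proof
    assume "min p (k * card A - k + 1) = p"
    then have "real p \<le> real (card (ks p A k))" using cd by simp
    then show False using ksK K by linarith
  qed
  then have "k * card A - k + 1 \<le> card (ks p A k)" using cd by linarith
  moreover have "real (k * card A - k + 1) = real k * (real (card A) - 1) + 1"
  proof -
    have "k \<le> k * card A" using cA by simp
    then show ?thesis by (simp add: of_nat_diff algebra_simps)
  qed
  ultimately have "real k * (real (card A) - 1) + 1 \<le> K" using ksK
    by (metis of_nat_le_iff order_trans)
  then have "real k * (real (card A) - 1) \<le> K" by simp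
  moreover have "c0 / c / 2 * (real (card A) - 1) \<le> real k * (real (card A) - 1)"
    by (rule mult_right_mono[OF k2]) (use cA in simp)
  ultimately have "c0 / c / 2 * (real (card A) - 1) \<le> K" by linarith
  then have "real (card A) - 1 \<le> 2 * K * c / c0" using c c00 by (simp add: field_simps)
  then show ?thesis unfolding A_def by simp
qed

end

context hz
begin

lemma main_int:
  assumes r: "1 \<le> r" "r \<le> n"
    and dist: "\<forall>x\<in>X r. \<forall>y\<in>X r. sig x = sig y \<longrightarrow> x = y"
    and bnd2: "\<forall>x\<in>X r. \<forall>y\<in>X r. \<bar>sig x - sig y\<bar> < int p"
    and C4: "card (X r) > 4"
    and bnd: "\<forall>S. S \<subseteq> {1..n} \<longrightarrow> \<bar>sig S - \<beta>\<bar> < int p"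
  shows "real (card {S. S \<subseteq> {1..n} \<and> sig S = \<beta>}) / 2 ^ n
     \<le> 192 * real r / (sqrt (real n) * real (card (X r))) + 2 / real p
        + exp (- real (nat \<lfloor>real n / (32 * (real r)\<^sup>2)\<rfloor>))"
proof -
  define c0 where "c0 = sqrt (real n) / (2 * real r)"
  define C where "C = real (card (X r))"
  define K where "K = 4 * real p / C"
  define L where "L = nat \<lfloor>c0\<^sup>2 / 8\<rfloor>"
  have n0: "n > 0" using r by simp
  have C4': "C > 4" using C4 unfolding C_def by simp
  have pp: "real p > 0" using p0 by simp
  have c00: "c0 > 0" unfolding c0_def using r n0 by simp
  have Kp: "K < real p" unfolding K_def using C4' pp by (simp add: field_simps)
  have K0: "K \<ge> 0" unfolding K_def using C4' by simp
  have TK: "real (card (T c0)) \<le> K"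
    using markov[OF dist bnd2 r] C4' unfolding K_def c0_def C_def by (simp add: field_simps)
  have c0sq: "c0\<^sup>2 / 8 = real n / (32 * (real r)\<^sup>2)"
    unfolding c0_def using n0 by (simp add: power_divide field_simps)
  have lev: "real (card {t \<in> {..<p}. (G t)\<^sup>2 / 8 \<le> real l + 1}) \<le> 6 * K * (real l + 1) / c0 + 1"
    if l: "l < L" for l
  proof -
    define cl where "cl = sqrt (8 * (real l + 1))"
    have cl0: "cl > 0" unfolding cl_def by simp
    have "real l + 1 \<le> real L" using l by simp
    also have "real L \<le> c0\<^sup>2 / 8"
    proof -
      have "0 \<le> \<lfloor>c0\<^sup>2 / 8\<rfloor>" by simp
      then have "real L = of_int \<lfloor>c0\<^sup>2 / 8\<rfloor>" unfolding L_def by simp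
      then show ?thesis using of_int_floor_le[of "c0\<^sup>2 / 8"] by linarith
    qed
    finally have "8 * (real l + 1) \<le> c0\<^sup>2" by simp
    then have clc0: "cl \<le> c0" unfolding cl_def using c00 by (simp add: real_sqrt_le_iff real_le_lsqrt)
    have seteq: "{t \<in> {..<p}. (G t)\<^sup>2 / 8 \<le> real l + 1} = T cl"
    proof -
      have "(G t)\<^sup>2 / 8 \<le> real l + 1 \<longleftrightarrow> G t \<le> cl" for t
      proof -
        have "(G t)\<^sup>2 / 8 \<le> real l + 1 \<longleftrightarrow> (G t)\<^sup>2 \<le> 8 * (real l + 1)" by (simp add: algebra_simps)
        also have "\<dots> \<longleftrightarrow> sqrt ((G t)\<^sup>2) \<le> cl" unfolding cl_def by (rule real_sqrt_le_iff[symmetric])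
        also have "sqrt ((G t)\<^sup>2) = G t" using G_nonneg[of t] by simp
        finally show ?thesis .
      qed
      then show ?thesis unfolding T_def by auto
    qed
    have "real (card (T cl)) \<le> 2 * K * cl / c0 + 1" by (rule level_bound[OF TK Kp cl0 clc0])
    also have "\<dots> \<le> 2 * K * (3 * (real l + 1)) / c0 + 1"
    proof -
      have "cl \<le> 3 * (real l + 1)" unfolding cl_def
        by (rule real_le_lsqrt) (auto simp: power2_eq_square algebra_simps)
      then show ?thesis using K0 c00 by (simp add: divide_right_mono mult_left_mono)
    qed
    finally show ?thesis unfolding seteq by (simp add: algebra_simps)
  qed
  have "(\<Sum>t<p. exp (- (G t)\<^sup>2 / 8))
      \<le> (\<Sum>t<p. (\<Sum>l<L. exp (- real l) * (if (G t)\<^sup>2 / 8 \<le> real l + 1 then 1 else 0)) + exp (- real L))"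
  proof (rule sum_mono)
    fix t show "exp (- (G t)\<^sup>2 / 8)
      \<le> (\<Sum>l<L. exp (- real l) * (if (G t)\<^sup>2 / 8 \<le> real l + 1 then 1 else 0)) + exp (- real L)"
      using layer_cake[of "(G t)\<^sup>2 / 8" L] by simp
  qed
  also have "\<dots> = (\<Sum>l<L. exp (- real l) * real (card {t \<in> {..<p}. (G t)\<^sup>2 / 8 \<le> real l + 1}))
      + real p * exp (- real L)"
  proof -
    have "(\<Sum>t<p. \<Sum>l<L. exp (- real l) * (if (G t)\<^sup>2 / 8 \<le> real l + 1 then 1 else 0))
        = (\<Sum>l<L. \<Sum>t<p. exp (- real l) * (if (G t)\<^sup>2 / 8 \<le> real l + 1 then 1 else 0))"
      by (rule sum.swap)
    also have "\<dots> = (\<Sum>l<L. exp (- real l) * real (card {t \<in> {..<p}. (G t)\<^sup>2 / 8 \<le> real l + 1}))"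
    proof (rule sum.cong[OF refl])
      fix l
      have "(\<Sum>t<p. exp (- real l) * (if (G t)\<^sup>2 / 8 \<le> real l + 1 then 1 else 0))
          = exp (- real l) * (\<Sum>t<p. (if (G t)\<^sup>2 / 8 \<le> real l + 1 then 1 else 0))"
        by (simp add: sum_distrib_left)
      also have "(\<Sum>t<p. (if (G t)\<^sup>2 / 8 \<le> real l + 1 then 1 else (0::real)))
          = real (card {t \<in> {..<p}. (G t)\<^sup>2 / 8 \<le> real l + 1})"
        using sum.inter_filter[of "{..<p}" "\<lambda>_. (1::real)" "\<lambda>t. (G t)\<^sup>2 / 8 \<le> real l + 1"] by simp
      finally show "(\<Sum>t<p. exp (- real l) * (if (G t)\<^sup>2 / 8 \<le> real l + 1 then 1 else 0))
          = exp (- real l) * real (card {t \<in> {..<p}. (G t)\<^sup>2 / 8 \<le> real l + 1})" .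
    qed
    finally show ?thesis by (simp add: sum.distrib)
  qed
  also have "\<dots> \<le> (\<Sum>l<L. (1/2) ^ l * (6 * K * (real l + 1) / c0 + 1)) + real p * exp (- real L)"
  proof -
    have "(\<Sum>l<L. exp (- real l) * real (card {t \<in> {..<p}. (G t)\<^sup>2 / 8 \<le> real l + 1}))
        \<le> (\<Sum>l<L. (1/2) ^ l * (6 * K * (real l + 1) / c0 + 1))"
    proof (rule sum_mono)
      fix l assume "l \<in> {..<L}"
      then have "l < L" by simp
      show "exp (- real l) * real (card {t \<in> {..<p}. (G t)\<^sup>2 / 8 \<le> real l + 1})
          \<le> (1/2) ^ l * (6 * K * (real l + 1) / c0 + 1)"
        by (rule mult_mono[OF exp_neg_le_half lev[OF \<open>l < L\<close>]]) (use K0 c00 in auto)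
    qed
    then show ?thesis by simp
  qed
  also have "(\<Sum>l<L. (1/2) ^ l * (6 * K * (real l + 1) / c0 + 1))
      = 6 * K / c0 * (\<Sum>l<L. (real l + 1) * (1/2) ^ l) + (\<Sum>l<L. (1/2::real) ^ l)"
  proof -
    have "(\<Sum>l<L. (1/2) ^ l * (6 * K * (real l + 1) / c0 + 1))
        = (\<Sum>l<L. 6 * K / c0 * ((real l + 1) * (1/2) ^ l) + (1/2::real) ^ l)"
      using c00 by (intro sum.cong refl) (simp add: field_simps)
    also have "\<dots> = 6 * K / c0 * (\<Sum>l<L. (real l + 1) * (1/2) ^ l) + (\<Sum>l<L. (1/2::real) ^ l)"
      by (simp only: sum.distrib sum_distrib_left)
    finally show ?thesis .
  qed
  also have "\<dots> \<le> 6 * K / c0 * 4 + 2"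
  proof -
    have "(\<Sum>l<L. (real l + 1) * (1/2::real) ^ l) \<le> 4" unfolding sum_lhalf by simp
    moreover have "(\<Sum>l<L. (1/2::real) ^ l) \<le> 2" unfolding sum_half by simp
    moreover have "6 * K / c0 \<ge> 0" using K0 c00 by simp
    ultimately show ?thesis by (meson add_mono mult_left_mono)
  qed
  finally have S: "(\<Sum>t<p. exp (- (G t)\<^sup>2 / 8)) \<le> 24 * K / c0 + 2 + real p * exp (- real L)"
    by simp
  have "real (card {S. S \<subseteq> {1..n} \<and> sig S = \<beta>}) / 2 ^ n \<le> (\<Sum>t<p. exp (- (G t)\<^sup>2 / 8)) / real p"
    by (rule fourier_bound[OF bnd])
  also have "\<dots> \<le> (24 * K / c0 + 2 + real p * exp (- real L)) / real p"
    using S pp by (simp add: divide_right_mono)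
  also have "\<dots> = 96 / (c0 * C) + 2 / real p + exp (- real L)"
    unfolding K_def using pp C4' c00 by (simp add: field_simps)
  also have "96 / (c0 * C) = 192 * real r / (sqrt (real n) * real (card (X r)))"
    unfolding c0_def C_def using r n0 by (simp add: field_simps)
  also have "L = nat \<lfloor>real n / (32 * (real r)\<^sup>2)\<rfloor>" unfolding L_def c0sq ..
  finally show ?thesis .
qed

end

lemma reduce_int:
  fixes a :: "nat \<Rightarrow> real" and n :: nat
  shows "\<exists>b::nat \<Rightarrow> int. \<forall>x y. x \<subseteq> {1..n} \<longrightarrow> y \<subseteq> {1..n} \<longrightarrow>
            ((\<Sum>i\<in>x. a i) = (\<Sum>i\<in>y. a i) \<longleftrightarrow> (\<Sum>i\<in>x. b i) = (\<Sum>i\<in>y. b i))"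
proof -
  define P where "P = Pow {1..n} \<times> Pow {1..n}"
  define D where "D = (\<lambda>(x,y). \<bar>(\<Sum>i\<in>x. a i) - (\<Sum>i\<in>y. a i)\<bar>) ` P - {0}"
  have finD: "finite D" unfolding D_def P_def by simp
  define \<delta> where "\<delta> = (if D = {} then 1 else Min D)"
  have \<delta>0: "\<delta> > 0"
  proof (cases "D = {}")
    case True then show ?thesis unfolding \<delta>_def by simp
  next
    case False
    have "\<forall>d\<in>D. d > 0" unfolding D_def by auto
    then show ?thesis unfolding \<delta>_def using False finD by simp
  qed
  have \<delta>le: "\<delta> \<le> \<bar>(\<Sum>i\<in>x. a i) - (\<Sum>i\<in>y. a i)\<bar>"
    if "x \<subseteq> {1..n}" "y \<subseteq> {1..n}" "(\<Sum>i\<in>x. a i) \<noteq> (\<Sum>i\<in>y. a i)" for x y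
  proof -
    have "\<bar>(\<Sum>i\<in>x. a i) - (\<Sum>i\<in>y. a i)\<bar> \<in> D" unfolding D_def P_def using that by force
    then show ?thesis unfolding \<delta>_def using finD by auto
  qed
  define N :: nat where "N = nat \<lceil>2 * real n / \<delta>\<rceil> + 2 * n + 1"
  have N0: "N > 0" unfolding N_def by simp
  have N1: "2 * real n / real N < 1"
  proof -
    have "2 * real n < real N" unfolding N_def by simp
    then show ?thesis using N0 by simp
  qed
  have N2: "2 * real n / real N < \<delta>"
  proof -
    have "2 * real n / \<delta> \<le> real (nat \<lceil>2 * real n / \<delta>\<rceil>)" by linarith
    also have "\<dots> < real N" unfolding N_def by simp
    finally have "2 * real n < \<delta> * real N" using \<delta>0 by (simp add: field_simps)
    then show ?thesis using N0 by (simp add: field_simps)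
  qed
  obtain q pp where q: "0 < q" and app: "\<And>i. i < Suc n \<Longrightarrow> \<bar>of_int q * a i - of_int (pp i)\<bar> < 1 / real N"
    using Dirichlet_approx_simult[OF N0, where \<theta>=a and n="Suc n"] by blast
  define e where "e i = of_int q * a i - of_int (pp i)" for i
  have errS: "\<bar>\<Sum>i\<in>x. e i\<bar> \<le> real n / real N" if "x \<subseteq> {1..n}" for x
  proof -
    have fx: "finite x" using that finite_subset by blast
    have "\<bar>\<Sum>i\<in>x. e i\<bar> \<le> (\<Sum>i\<in>x. \<bar>e i\<bar>)" by (rule sum_abs)
    also have "\<dots> \<le> (\<Sum>i\<in>x. 1 / real N)"
    proof (rule sum_mono)
      fix i assume "i \<in> x"
      then have "i < Suc n" using that by auto
      then show "\<bar>e i\<bar> \<le> 1 / real N" using app unfolding e_def by (simp add: less_imp_le)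
    qed
    also have "\<dots> = real (card x) / real N" by simp
    also have "\<dots> \<le> real n / real N"
    proof -
      have "card x \<le> card {1..n}" by (rule card_mono) (use that in auto)
      then show ?thesis by (simp add: divide_right_mono)
    qed
    finally show ?thesis .
  qed
  have key: "(\<Sum>i\<in>x. of_int (pp i)) - (\<Sum>i\<in>y. of_int (pp i)) =
        of_int q * ((\<Sum>i\<in>x. a i) - (\<Sum>i\<in>y. a i)) - ((\<Sum>i\<in>x. e i) - (\<Sum>i\<in>y. e i))" for x y
    unfolding e_def by (simp add: sum_subtractf sum_distrib_left algebra_simps)
  show ?thesis
  proof (intro exI[of _ pp] allI impI)
    fix x y assume xy: "x \<subseteq> {1..n}" "y \<subseteq> {1..n}"
    define err where "err = (\<Sum>i\<in>x. e i) - (\<Sum>i\<in>y. e i)"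
    have errb: "\<bar>err\<bar> \<le> 2 * real n / real N"
      using errS[OF xy(1)] errS[OF xy(2)] unfolding err_def by simp
    have kk: "real_of_int ((\<Sum>i\<in>x. pp i) - (\<Sum>i\<in>y. pp i)) =
        of_int q * ((\<Sum>i\<in>x. a i) - (\<Sum>i\<in>y. a i)) - err"
      using key[of x y] unfolding err_def by simp
    show "(\<Sum>i\<in>x. a i) = (\<Sum>i\<in>y. a i) \<longleftrightarrow> (\<Sum>i\<in>x. pp i) = (\<Sum>i\<in>y. pp i)"
    proof
      assume eq: "(\<Sum>i\<in>x. a i) = (\<Sum>i\<in>y. a i)"
      then have "\<bar>real_of_int ((\<Sum>i\<in>x. pp i) - (\<Sum>i\<in>y. pp i))\<bar> < 1"
        using kk errb N1 by simp
      then have "\<bar>(\<Sum>i\<in>x. pp i) - (\<Sum>i\<in>y. pp i)\<bar> < 1" by linarith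
      then show "(\<Sum>i\<in>x. pp i) = (\<Sum>i\<in>y. pp i)" by simp
    next
      assume eq: "(\<Sum>i\<in>x. pp i) = (\<Sum>i\<in>y. pp i)"
      show "(\<Sum>i\<in>x. a i) = (\<Sum>i\<in>y. a i)"
      proof (rule ccontr)
        assume ne: "(\<Sum>i\<in>x. a i) \<noteq> (\<Sum>i\<in>y. a i)"
        have "\<delta> \<le> \<bar>(\<Sum>i\<in>x. a i) - (\<Sum>i\<in>y. a i)\<bar>" by (rule \<delta>le[OF xy ne])
        also have "\<dots> \<le> \<bar>of_int q * ((\<Sum>i\<in>x. a i) - (\<Sum>i\<in>y. a i))\<bar>"
        proof -
          have "real_of_int q \<ge> 1" using q by simp
          then show ?thesis by (simp add: abs_mult mult_le_cancel_right1)
        qed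
        also have "\<dots> = \<bar>err\<bar>" using kk eq by simp
        also have "\<dots> < \<delta>" using errb N2 by simp
        finally show False by simp
      qed
    qed
  qed
qed

lemma hyp_dist:
  fixes a :: "nat \<Rightarrow> real"
  assumes hyp: "\<forall>x y. x \<subseteq> {1..n} \<longrightarrow> y \<subseteq> {1..n} \<longrightarrow> x \<inter> y = {} \<longrightarrow>
        (x \<noteq> {} \<or> y \<noteq> {}) \<longrightarrow> card x + card y \<le> 2 * r \<longrightarrow>
        (\<Sum>i\<in>x. a i) \<noteq> (\<Sum>j\<in>y. a j)"
    and xy: "x \<subseteq> {1..n}" "y \<subseteq> {1..n}" "card x = r" "card y = r" "(\<Sum>i\<in>x. a i) = (\<Sum>i\<in>y. a i)"
  shows "x = y"
proof (rule ccontr)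
  assume ne: "x \<noteq> y"
  have fx: "finite x" and fy: "finite y" using xy finite_subset by blast+
  define x' where "x' = x - y"
  define y' where "y' = y - x"
  have "x' \<noteq> {} \<or> y' \<noteq> {}" using ne unfolding x'_def y'_def by blast
  moreover have "x' \<inter> y' = {}" unfolding x'_def y'_def by blast
  moreover have "card x' + card y' \<le> 2 * r"
  proof -
    have "card x' \<le> card x" unfolding x'_def using fx by (simp add: card_mono)
    moreover have "card y' \<le> card y" unfolding y'_def using fy by (simp add: card_mono)
    ultimately show ?thesis using xy by simp
  qed
  moreover have "x' \<subseteq> {1..n}" "y' \<subseteq> {1..n}" using xy unfolding x'_def y'_def by auto
  moreover have "(\<Sum>i\<in>x'. a i) = (\<Sum>i\<in>y'. a i)"
  proof -
    have "(\<Sum>i\<in>x. a i) = (\<Sum>i\<in>x'. a i) + (\<Sum>i\<in>x \<inter> y. a i)"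
      using sum.Int_Diff[OF fx, of a y] unfolding x'_def by simp
    moreover have "(\<Sum>i\<in>y. a i) = (\<Sum>i\<in>y'. a i) + (\<Sum>i\<in>x \<inter> y. a i)"
      using sum.Int_Diff[OF fy, of a x] unfolding y'_def by (simp add: Int_commute)
    ultimately show ?thesis using xy by simp
  qed
  ultimately show False using hyp by blast
qed

lemma abs_sig_le:
  fixes b :: "nat \<Rightarrow> int"
  assumes "x \<subseteq> {1..n}"
  shows "\<bar>\<Sum>i\<in>x. b i\<bar> \<le> (\<Sum>i\<in>{1..n}. \<bar>b i\<bar>)"
proof -
  have "\<bar>\<Sum>i\<in>x. b i\<bar> \<le> (\<Sum>i\<in>x. \<bar>b i\<bar>)" by (rule sum_abs)
  also have "\<dots> \<le> (\<Sum>i\<in>{1..n}. \<bar>b i\<bar>)" by (rule sum_mono2) (use assms in auto)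
  finally show ?thesis .
qed

lemma prob_large:
  fixes a :: "nat \<Rightarrow> real" and r n :: nat
  assumes r: "r \<ge> 1" and nr: "real n \<ge> 32 * (real r)\<^sup>2"
    and hyp: "\<forall>x y. x \<subseteq> {1..n} \<longrightarrow> y \<subseteq> {1..n} \<longrightarrow> x \<inter> y = {} \<longrightarrow>
        (x \<noteq> {} \<or> y \<noteq> {}) \<longrightarrow> card x + card y \<le> 2 * r \<longrightarrow>
        (\<Sum>i\<in>x. a i) \<noteq> (\<Sum>j\<in>y. a j)"
  shows "prob_sum n a \<alpha> \<le> 192 * real r / (sqrt (real n) * real (n choose r))
        + exp (- real (nat \<lfloor>real n / (32 * (real r)\<^sup>2)\<rfloor>))"
proof -
  define M where "M = 192 * real r / (sqrt (real n) * real (n choose r))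
        + exp (- real (nat \<lfloor>real n / (32 * (real r)\<^sup>2)\<rfloor>))"
  have M0: "M \<ge> 0" unfolding M_def by simp
  have rn: "r \<le> n"
  proof -
    have "real r \<le> (real r)\<^sup>2" using r by (simp add: power2_eq_square)
    then have "real r \<le> real n" using nr by linarith
    then show ?thesis by simp
  qed
  have n1: "n \<ge> 1" using r rn by simp
  have C4: "n choose r > 4"
  proof -
    have "(real n / real r) ^ r \<le> real (n choose r)" by (rule binomial_ge_n_over_k_pow_k[OF rn])
    moreover have "real n / real r \<ge> 32 * real r"
      using nr r by (simp add: field_simps power2_eq_square)
    moreover have "real n / real r \<le> (real n / real r) ^ r"
    proof -
      have "32 * real r \<ge> 1" using r by simp
      then have "real n / real r \<ge> 1" using \<open>real n / real r \<ge> 32 * real r\<close> by linarith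
      then show ?thesis using r by (metis One_nat_def power_increasing power_one_right)
    qed
    ultimately have "real (n choose r) \<ge> 32 * real r" by linarith
    moreover have "32 * real r \<ge> 32" using r by simp
    ultimately show ?thesis by simp
  qed
  define b where "b = (SOME b::nat \<Rightarrow> int. \<forall>x y. x \<subseteq> {1..n} \<longrightarrow> y \<subseteq> {1..n} \<longrightarrow>
            ((\<Sum>i\<in>x. a i) = (\<Sum>i\<in>y. a i) \<longleftrightarrow> (\<Sum>i\<in>x. b i) = (\<Sum>i\<in>y. b i)))"
  have b: "\<forall>x y. x \<subseteq> {1..n} \<longrightarrow> y \<subseteq> {1..n} \<longrightarrow>
            ((\<Sum>i\<in>x. a i) = (\<Sum>i\<in>y. a i) \<longleftrightarrow> (\<Sum>i\<in>x. b i) = (\<Sum>i\<in>y. b i))"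
    unfolding b_def by (rule someI_ex[OF reduce_int[of n a]])
  define B where "B = (\<Sum>i\<in>{1..n}. \<bar>b i\<bar>)"
  show ?thesis
  proof (cases "\<exists>S0. S0 \<subseteq> {1..n} \<and> (\<Sum>i\<in>S0. a i) = \<alpha>")
    case False
    then have em: "{S. S \<subseteq> {1..n} \<and> (\<Sum>i\<in>S. a i) = \<alpha>} = {}" by blast
    have "prob_sum n a \<alpha> = 0" unfolding prob_sum_def em by simp
    then show ?thesis using M0 unfolding M_def by simp
  next
    case True
    then obtain S0 where S0: "S0 \<subseteq> {1..n}" "(\<Sum>i\<in>S0. a i) = \<alpha>" by blast
    define \<beta> where "\<beta> = (\<Sum>i\<in>S0. b i)"
    have seteq: "{S. S \<subseteq> {1..n} \<and> (\<Sum>i\<in>S. a i) = \<alpha>} = {S. S \<subseteq> {1..n} \<and> (\<Sum>i\<in>S. b i) = \<beta>}"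
    proof (intro set_eqI)
      fix S
      show "S \<in> {S. S \<subseteq> {1..n} \<and> (\<Sum>i\<in>S. a i) = \<alpha>} \<longleftrightarrow> S \<in> {S. S \<subseteq> {1..n} \<and> (\<Sum>i\<in>S. b i) = \<beta>}"
        using b[rule_format, of S S0] S0 unfolding \<beta>_def by auto
    qed
    have "prob_sum n a \<alpha> \<le> M + e" if e: "e > 0" for e
    proof -
      obtain p where p: "prime p" "p > nat (2 * B) + nat \<lceil>2 / e\<rceil>" using bigger_prime by blast
      interpret hz p b n by unfold_locales (rule p(1))
      have sig_eq: "sig S = (\<Sum>i\<in>S. b i)" for S unfolding sig_def ..
      have pB: "2 * B < int p" using p(2) by linarith
      have pe: "2 / real p \<le> e"
      proof -
        have "2 / e \<le> real (nat \<lceil>2 / e\<rceil>)" by linarith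
        also have "\<dots> \<le> real p"
        proof -
          have "nat \<lceil>2 / e\<rceil> \<le> p" using p(2) by linarith
          then show ?thesis by (simp only: of_nat_le_iff)
        qed
        finally have "2 / e \<le> real p" .
        then show ?thesis using e p0 by (simp add: field_simps)
      qed
      have dist: "\<forall>x\<in>X r. \<forall>y\<in>X r. sig x = sig y \<longrightarrow> x = y"
      proof (intro ballI impI)
        fix x y assume xy: "x \<in> X r" "y \<in> X r" "sig x = sig y"
        then have "(\<Sum>i\<in>x. a i) = (\<Sum>i\<in>y. a i)" using b[rule_format, of x y] xy unfolding X_def sig_eq by auto
        then show "x = y" using hyp_dist[OF hyp] xy unfolding X_def by auto
      qed
      have bnd2: "\<forall>x\<in>X r. \<forall>y\<in>X r. \<bar>sig x - sig y\<bar> < int p"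
      proof (intro ballI)
        fix x y assume xy: "x \<in> X r" "y \<in> X r"
        have "\<bar>sig x - sig y\<bar> \<le> \<bar>sig x\<bar> + \<bar>sig y\<bar>" by simp
        also have "\<dots> \<le> B + B" unfolding sig_eq B_def
          using abs_sig_le[of x n b] abs_sig_le[of y n b] xy unfolding X_def by (simp add: add_mono)
        finally show "\<bar>sig x - sig y\<bar> < int p" using pB by simp
      qed
      have bnd: "\<forall>S. S \<subseteq> {1..n} \<longrightarrow> \<bar>sig S - \<beta>\<bar> < int p"
      proof (intro allI impI)
        fix S assume S: "S \<subseteq> {1..n}"
        have "\<bar>sig S - \<beta>\<bar> \<le> \<bar>sig S\<bar> + \<bar>\<beta>\<bar>" by simp
        also have "\<dots> \<le> B + B" unfolding sig_eq B_def \<beta>_def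
          using abs_sig_le[of S n b] abs_sig_le[of S0 n b] S S0 by (simp add: add_mono)
        finally show "\<bar>sig S - \<beta>\<bar> < int p" using pB by simp
      qed
      have C4': "card (X r) > 4" using C4 card_X by simp
      have "prob_sum n a \<alpha> = real (card {S. S \<subseteq> {1..n} \<and> sig S = \<beta>}) / 2 ^ n"
        unfolding prob_sum_def seteq sig_eq ..
      also have "\<dots> \<le> 192 * real r / (sqrt (real n) * real (card (X r))) + 2 / real p
        + exp (- real (nat \<lfloor>real n / (32 * (real r)\<^sup>2)\<rfloor>))"
        by (rule main_int[OF r rn dist bnd2 C4' bnd])
      also have "\<dots> \<le> M + e" unfolding M_def card_X using pe by simp
      finally show ?thesis .
    qed
    then show ?thesis unfolding M_def[symmetric] by (rule field_le_epsilon)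
  qed
qed

lemma powr_eq:
  assumes "n \<ge> 1"
  shows "real n powr (- real r - 1/2) = 1 / (real n ^ r * sqrt (real n))"
proof -
  have n0: "real n > 0" using assms by simp
  have e1: "- real r - 1/2 = - (real r + 1/2)" by simp
  have "real n powr (- real r - 1/2) = inverse (real n powr (real r + 1/2))"
    unfolding e1 by (rule powr_minus)
  also have "real n powr (real r + 1/2) = real n powr real r * real n powr (1/2)"
    by (rule powr_add)
  also have "real n powr real r = real n ^ r" using n0 by (rule powr_realpow)
  also have "real n powr (1/2) = sqrt (real n)" using n0 by (simp only: powr_half_sqrt less_imp_le)
  finally show ?thesis by (simp only: inverse_eq_divide)
qed

lemma prob_le1: "prob_sum n a \<alpha> \<le> 1"
proof -
  have "{S. S \<subseteq> {1..n} \<and> (\<Sum>i\<in>S. a i) = \<alpha>} \<subseteq> Pow {1..n}" by auto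
  then have "card {S. S \<subseteq> {1..n} \<and> (\<Sum>i\<in>S. a i) = \<alpha>} \<le> card (Pow {1..n})"
    by (rule card_mono[rotated]) simp
  also have "card (Pow {1..n}) = 2 ^ n" by (simp add: card_Pow)
  finally have "real (card {S. S \<subseteq> {1..n} \<and> (\<Sum>i\<in>S. a i) = \<alpha>}) \<le> real (2 ^ n)"
    by (simp only: of_nat_le_iff)
  then have "real (card {S. S \<subseteq> {1..n} \<and> (\<Sum>i\<in>S. a i) = \<alpha>}) \<le> 2 ^ n" by simp
  then show ?thesis unfolding prob_sum_def by simp
qed

lemma exp_lower:
  fixes x :: real
  assumes "x \<ge> 0" "m \<ge> 1"
  shows "(x / real m) ^ m \<le> exp x"
proof -
  have m0: "real m > 0" using assms by simp
  have "exp x = exp (real m * (x / real m))" using m0 by simp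
  also have "\<dots> = exp (x / real m) ^ m" by (rule exp_of_nat_mult)
  finally have e: "exp x = exp (x / real m) ^ m" .
  have "x / real m \<le> exp (x / real m)"
    using exp_ge_add_one_self[of "x / real m"] by linarith
  then have "(x / real m) ^ m \<le> exp (x / real m) ^ m"
    by (rule power_mono) (use assms m0 in simp)
  then show ?thesis using e by simp
qed

lemma final_large:
  fixes r n :: nat
  assumes r: "r \<ge> 1" and nr: "real n \<ge> 32 * (real r)\<^sup>2"
  shows "192 * real r / (sqrt (real n) * real (n choose r))
        + exp (- real (nat \<lfloor>real n / (32 * (real r)\<^sup>2)\<rfloor>))
      \<le> (192 * real r ^ (r + 1) + exp 1 * (real (r + 1) * (32 * (real r)\<^sup>2)) ^ (r + 1))
         / (real n ^ r * sqrt (real n))"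
proof -
  define Q where "Q = real n ^ r * sqrt (real n)"
  define m where "m = r + 1"
  have rr: "real r \<le> (real r)\<^sup>2" using r by (simp add: power2_eq_square)
  have n1: "real n \<ge> 1" using nr rr r by linarith
  have rn: "r \<le> n" using nr rr by linarith
  have Q0: "Q > 0" unfolding Q_def using n1 by simp
  have r0: "real r > 0" using r by simp
  have T1: "192 * real r / (sqrt (real n) * real (n choose r)) \<le> 192 * real r ^ (r + 1) / Q"
  proof -
    have "(real n / real r) ^ r \<le> real (n choose r)" by (rule binomial_ge_n_over_k_pow_k[OF rn])
    then have "sqrt (real n) * (real n / real r) ^ r \<le> sqrt (real n) * real (n choose r)"
      by (rule mult_left_mono) simp
    moreover have "sqrt (real n) * (real n / real r) ^ r > 0" using n1 r0 by simp
    ultimately have "192 * real r / (sqrt (real n) * real (n choose r))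
        \<le> 192 * real r / (sqrt (real n) * (real n / real r) ^ r)"
      by (intro divide_left_mono) (use r0 in auto)
    also have "\<dots> = 192 * real r ^ (r + 1) / Q"
      unfolding Q_def using r0 n1 by (simp add: power_divide field_simps)
    finally show ?thesis .
  qed
  define x where "x = real n / (32 * (real r)\<^sup>2)"
  have x1: "x \<ge> 1" unfolding x_def using nr r0 by (simp add: field_simps)
  have L: "real (nat \<lfloor>x\<rfloor>) \<ge> x - 1"
  proof -
    have "0 \<le> \<lfloor>x\<rfloor>" using x1 by simp
    then have "real (nat \<lfloor>x\<rfloor>) = of_int \<lfloor>x\<rfloor>" by simp
    then show ?thesis by linarith
  qed
  have T2: "exp (- real (nat \<lfloor>x\<rfloor>)) \<le> exp 1 * (real (r + 1) * (32 * (real r)\<^sup>2)) ^ (r + 1) / Q"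
  proof -
    have "exp (- real (nat \<lfloor>x\<rfloor>)) \<le> exp (1 - x)" using L by simp
    also have "\<dots> = exp 1 / exp x" by (simp add: exp_diff)
    also have "\<dots> \<le> exp 1 / (x / real m) ^ m"
    proof (rule divide_left_mono)
      show "(x / real m) ^ m \<le> exp x" by (rule exp_lower) (use x1 in \<open>auto simp: m_def\<close>)
      show "0 < exp x * (x / real m) ^ m" using x1 by (simp add: m_def)
    qed simp
    also have "\<dots> = exp 1 * (real m * (32 * (real r)\<^sup>2)) ^ m / real n ^ m"
    proof -
      have "x / real m = real n / (real m * (32 * (real r)\<^sup>2))" unfolding x_def by simp
      then have "(x / real m) ^ m = real n ^ m / (real m * (32 * (real r)\<^sup>2)) ^ m"
        by (simp only: power_divide)
      then show ?thesis by (simp only: divide_divide_eq_right)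
    qed
    also have "\<dots> \<le> exp 1 * (real m * (32 * (real r)\<^sup>2)) ^ m / Q"
    proof (rule divide_left_mono)
      have "sqrt (real n) * 1 \<le> sqrt (real n) * sqrt (real n)"
        by (rule mult_left_mono) (use n1 in auto)
      then have "sqrt (real n) \<le> real n" by simp
      then show "Q \<le> real n ^ m" unfolding Q_def m_def using n1 by (simp add: mult_left_mono)
      show "0 < real n ^ m * Q" using Q0 n1 by simp
    qed simp
    finally show ?thesis unfolding m_def .
  qed
  have "192 * real r / (sqrt (real n) * real (n choose r)) + exp (- real (nat \<lfloor>x\<rfloor>))
      \<le> 192 * real r ^ (r + 1) / Q + exp 1 * (real (r + 1) * (32 * (real r)\<^sup>2)) ^ (r + 1) / Q"
    using T1 T2 by simp
  also have "\<dots> = (192 * real r ^ (r + 1) + exp 1 * (real (r + 1) * (32 * (real r)\<^sup>2)) ^ (r + 1)) / Q"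
    by (simp add: add_divide_distrib)
  finally show ?thesis unfolding Q_def x_def .
qed

lemma final_small:
  fixes r n :: nat
  assumes n1: "n \<ge> 1" and nr: "real n < 32 * (real r)\<^sup>2"
  shows "1 \<le> (32 * (real r)\<^sup>2) ^ (r + 1) / (real n ^ r * sqrt (real n))"
proof -
  have nn: "real n \<ge> 1" using n1 by simp
  have sq: "sqrt (real n) \<le> real n"
  proof -
    have "sqrt (real n) * 1 \<le> sqrt (real n) * sqrt (real n)"
      by (rule mult_left_mono) (use nn in auto)
    then show ?thesis by simp
  qed
  have "real n ^ r * sqrt (real n) \<le> real n ^ r * real n" by (rule mult_left_mono[OF sq]) simp
  also have "\<dots> = real n ^ (r + 1)" by simp
  also have "\<dots> \<le> (32 * (real r)\<^sup>2) ^ (r + 1)" by (rule power_mono) (use nr in auto)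
  finally have "real n ^ r * sqrt (real n) \<le> (32 * (real r)\<^sup>2) ^ (r + 1)" .
  moreover have "real n ^ r * sqrt (real n) > 0" using nn by simp
  ultimately show ?thesis by simp
qed

theorem theorem2:
  fixes r :: nat
  assumes "r \<ge> 1"
  shows "\<exists>C > 0. \<forall>(n::nat) (a::nat \<Rightarrow> real). n \<ge> 1 \<longrightarrow>
     (\<forall>x y. x \<subseteq> {1..n} \<longrightarrow> y \<subseteq> {1..n} \<longrightarrow> x \<inter> y = {} \<longrightarrow>
        (x \<noteq> {} \<or> y \<noteq> {}) \<longrightarrow> card x + card y \<le> 2 * r \<longrightarrow>
        (\<Sum>i\<in>x. a i) \<noteq> (\<Sum>j\<in>y. a j)) \<longrightarrow>
     rho n a \<le> C * real n powr (- real r - 1/2)"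
proof -
  define K1 where "K1 = 192 * real r ^ (r + 1) + exp 1 * (real (r + 1) * (32 * (real r)\<^sup>2)) ^ (r + 1)"
  define K2 where "K2 = (32 * (real r)\<^sup>2) ^ (r + 1)"
  have K1: "K1 > 0" unfolding K1_def using assms by (simp add: add_pos_nonneg)
  have K2: "K2 > 0" unfolding K2_def using assms by simp
  show ?thesis
  proof (intro exI[of _ "K1 + K2"] conjI allI impI)
    show "K1 + K2 > 0" using K1 K2 by simp
  next
    fix n :: nat and a :: "nat \<Rightarrow> real"
    assume n1: "n \<ge> 1"
    assume hyp: "\<forall>x y. x \<subseteq> {1..n} \<longrightarrow> y \<subseteq> {1..n} \<longrightarrow> x \<inter> y = {} \<longrightarrow>
        (x \<noteq> {} \<or> y \<noteq> {}) \<longrightarrow> card x + card y \<le> 2 * r \<longrightarrow>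
        (\<Sum>i\<in>x. a i) \<noteq> (\<Sum>j\<in>y. a j)"
    define Q where "Q = real n ^ r * sqrt (real n)"
    have Q0: "Q > 0" unfolding Q_def using n1 by simp
    have each: "prob_sum n a \<alpha> \<le> (K1 + K2) / Q" for \<alpha>
    proof (cases "real n \<ge> 32 * (real r)\<^sup>2")
      case True
      have "prob_sum n a \<alpha> \<le> K1 / Q"
        using prob_large[OF assms True hyp, of \<alpha>] final_large[OF assms True]
        unfolding K1_def Q_def by linarith
      also have "\<dots> \<le> (K1 + K2) / Q" using K2 Q0 by (simp add: divide_right_mono)
      finally show ?thesis .
    next
      case False
      have "prob_sum n a \<alpha> \<le> K2 / Q"
        using prob_le1[of n a \<alpha>] final_small[OF n1, of r] False unfolding K2_def Q_def by linarith
      also have "\<dots> \<le> (K1 + K2) / Q" using K1 Q0 by (simp add: divide_right_mono)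
      finally show ?thesis .
    qed
    have "rho n a \<le> (K1 + K2) / Q"
      unfolding rho_def by (rule cSUP_least) (auto intro: each)
    also have "\<dots> = (K1 + K2) * real n powr (- real r - 1/2)"
      unfolding powr_eq[OF n1] Q_def by simp
    finally show "rho n a \<le> (K1 + K2) * real n powr (- real r - 1/2)" .
  qed
qed

end
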